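(* Let $m\ge 1$, $\bar l=(l_0,\dots,l_m)\in\mathbb{Z}_{\ge1}^{m+1}$, $L=l_0+\dots+l_m$, let $\alpha_1,\dots,\alpha_m$ be indeterminates and $\alpha_0=0$. For $j=0,1,\dots,m$ define \[ A_{\bar l,j}(t,\bar\alpha)=\sum_{i=l_j}^{L}t^{L-i}\,i!\,\sigma_i\big(\bar l,(\alpha_0-\alpha_j,\alpha_1-\alpha_j,\dots,\alpha_m-\alpha_j)\big). \] Then $\frac{1}{l_j!}A_{\bar l,j}(t,\bar\alpha)\in\mathbb{Z}[t,\alpha_1,\dots,\alpha_m]$ for all $j=0,1,\dots,m$.
   Context: For $\bar\beta=(\beta_0,\dots,\beta_m)$ the coefficients $\sigma_i(\bar l,\bar\beta)$ are defined by $\prod_{h=0}^m(\beta_h-w)^{l_h}=\sum_{i=0}^L\sigma_i(\bar l,\bar\beta)w^i$. (For $\bar\beta$ whose $j$-th coordinate is $0$, $\sigma_i=0$ for $i<l_j$.) For $j\ge1$, $A_{\bar l,j}$ is the polynomial satisfying $e^{\alpha_jt}A_{\bar l,0}(t)-A_{\bar l,j}(t)=O(t^{L+1})$ with $\deg_t A_{\bar l,j}\le L-l_j$. *)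

theory Defs
  imports "HOL-Library.Poly_Mapping" "HOL-Computational_Algebra.Polynomial"
begin

text \<open>Variable 0 plays the role of t,
  variable k (1 <= k <= m) the role of the indeterminate alpha_k.\<close>

type_synonym mpoly = "(nat \<Rightarrow>\<^sub>0 nat) \<Rightarrow>\<^sub>0 rat"

definition mvar :: "nat \<Rightarrow> mpoly" where
  "mvar k = Poly_Mapping.single (Poly_Mapping.single k 1) 1"

definition mconst :: "rat \<Rightarrow> mpoly" where
  "mconst c = Poly_Mapping.single 0 c"

definition int_coeffs :: "mpoly \<Rightarrow> bool" where
  "int_coeffs P \<longleftrightarrow> (\<forall>\<mu>. Poly_Mapping.lookup P \<mu> \<in> \<int>)"

definition alpha :: "nat \<Rightarrow> mpoly" where
  "alpha k = (if k = 0 then 0 else mvar k)"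

definition sigma :: "nat \<Rightarrow> (nat \<Rightarrow> nat) \<Rightarrow> (nat \<Rightarrow> mpoly) \<Rightarrow> nat \<Rightarrow> mpoly" where
  "sigma m l beta i = coeff (\<Prod>h\<le>m. [:beta h, -1:] ^ l h) i"

definition Ltot :: "nat \<Rightarrow> (nat \<Rightarrow> nat) \<Rightarrow> nat" where
  "Ltot m l = (\<Sum>h\<le>m. l h)"

definition A_poly :: "nat \<Rightarrow> (nat \<Rightarrow> nat) \<Rightarrow> nat \<Rightarrow> mpoly" where
  "A_poly m l j = (\<Sum>i = l j..Ltot m l.
      mvar 0 ^ (Ltot m l - i) * of_nat (fact i) * sigma m l (\<lambda>h. alpha h - alpha j) i)"

end

theory Submission
  imports Defs
begin

lemma Sum_any_Ints: "(\<And>x. f x \<in> \<int>) \<Longrightarrow> Sum_any f \<in> (\<int> :: rat set)"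
  unfolding Sum_any.expand_set by (rule Ints_sum) auto

lemma when_Ints: "a \<in> \<int> \<Longrightarrow> (a when P) \<in> (\<int> :: rat set)"
  by (simp add: when_def)

lemma ic_mult: "int_coeffs p \<Longrightarrow> int_coeffs q \<Longrightarrow> int_coeffs (p * q)"
  unfolding int_coeffs_def lookup_mult
  by (intro allI Sum_any_Ints Ints_mult when_Ints) auto

lemma ic_add: "int_coeffs p \<Longrightarrow> int_coeffs q \<Longrightarrow> int_coeffs (p + q)"
  unfolding int_coeffs_def lookup_add by auto

lemma ic_uminus: "int_coeffs p \<Longrightarrow> int_coeffs (- p)"
  unfolding int_coeffs_def by auto

lemma ic_diff: "int_coeffs p \<Longrightarrow> int_coeffs q \<Longrightarrow> int_coeffs (p - q)"
  unfolding int_coeffs_def lookup_minus by auto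

lemma ic_0: "int_coeffs 0"
  unfolding int_coeffs_def by auto

lemma ic_1: "int_coeffs 1"
  unfolding int_coeffs_def lookup_one by (auto simp: when_def)

lemma ic_of_nat: "int_coeffs (of_nat n)"
  unfolding int_coeffs_def lookup_of_nat by (auto simp: when_def)

lemma ic_mvar: "int_coeffs (mvar k)"
  unfolding int_coeffs_def mvar_def lookup_single by (auto simp: when_def)

lemma ic_power: "int_coeffs p \<Longrightarrow> int_coeffs (p ^ n)"
  by (induction n) (auto intro: ic_mult ic_1)

lemma ic_sum: "(\<And>i. i \<in> A \<Longrightarrow> int_coeffs (f i)) \<Longrightarrow> int_coeffs (sum f A)"
  unfolding int_coeffs_def lookup_sum by (auto intro: Ints_sum)

lemma ic_alpha: "int_coeffs (alpha k)"
  unfolding alpha_def by (auto intro: ic_0 ic_mvar)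

definition pic :: "mpoly poly \<Rightarrow> bool" where
  "pic p \<longleftrightarrow> (\<forall>i. int_coeffs (coeff p i))"

lemma pic_mult: "pic p \<Longrightarrow> pic q \<Longrightarrow> pic (p * q)"
  unfolding pic_def coeff_mult by (auto intro!: ic_sum ic_mult)

lemma pic_1: "pic 1"
  unfolding pic_def coeff_1 by (auto intro: ic_0 ic_1)

lemma pic_power: "pic p \<Longrightarrow> pic (p ^ n)"
  by (induction n) (auto intro: pic_mult pic_1)

lemma pic_prod: "(\<And>h. h \<le> m \<Longrightarrow> pic (f h)) \<Longrightarrow> pic (\<Prod>h\<le>(m::nat). f h)"
  by (induction m) (auto simp: atMost_Suc intro: pic_mult)

lemma pic_lin: "int_coeffs a \<Longrightarrow> pic [:a, -1:]"
  unfolding pic_def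
proof
  fix i assume "int_coeffs a"
  then show "int_coeffs (coeff [:a, -1:] i)"
    by (cases i; cases "i - 1") (auto intro: ic_0 ic_uminus ic_1 simp: coeff_pCons)
qed

lemma ic_sigma: "int_coeffs (sigma m l (\<lambda>h. alpha h - alpha j) i)"
proof -
  have "pic (\<Prod>h\<le>m. [:alpha h - alpha j, -1:] ^ l h)"
    by (intro pic_prod pic_power pic_lin ic_diff ic_alpha)
  then show ?thesis unfolding sigma_def pic_def by auto
qed

theorem lemma4p3:
  fixes m :: nat and l :: "nat \<Rightarrow> nat" and j :: nat
  assumes "m \<ge> 1"
    and "\<forall>h\<le>m. l h \<ge> 1"
    and "j \<le> m"
  shows "int_coeffs (mconst (1 / of_nat (fact (l j))) * A_poly m l j)"
proof -
  have key: "mconst (1 / of_nat (fact (l j))) * of_nat (fact i) = (of_nat (fact i div fact (l j)) :: mpoly)"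
    if lji: "l j \<le> i" for i
  proof -
    obtain k where k: "fact i = fact (l j) * (k::nat)"
      using fact_dvd[OF lji] by (auto elim: dvdE)
    have "(1 / of_nat (fact (l j))) * of_nat (fact i) = (of_nat k :: rat)"
      using k by simp
    moreover have "fact i div fact (l j) = k" using k by simp
    ultimately show ?thesis
      unfolding mconst_def
      by (metis mult_single single_of_nat add_0)
  qed
  have "mconst (1 / of_nat (fact (l j))) * A_poly m l j =
    (\<Sum>i = l j..Ltot m l. mvar 0 ^ (Ltot m l - i) *
        (mconst (1 / of_nat (fact (l j))) * of_nat (fact i)) * sigma m l (\<lambda>h. alpha h - alpha j) i)"
    unfolding A_poly_def sum_distrib_left by (rule sum.cong) (simp_all add: ac_simps)
  also have "\<dots> = (\<Sum>i = l j..Ltot m l. mvar 0 ^ (Ltot m l - i) *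
        of_nat (fact i div fact (l j)) * sigma m l (\<lambda>h. alpha h - alpha j) i)"
    by (rule sum.cong) (simp, subst key, auto)
  finally show ?thesis
    by (auto intro!: ic_sum ic_mult ic_power ic_mvar ic_of_nat ic_sigma)
qed

end
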